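(* Assume (H$\mathscr K$), (H$\mathscr L$), (H$\mathscr M$), (H$\mathscr F$), (H$\mathscr G$), (H$\mathscr E$), (H$\gamma$), (H$\Psi$), $c_{\mathscr F}>c_{\mathscr G}\|\gamma\|^p$, and that $\mathscr F$ is strictly monotone, so that Problem 2 has a unique solution $\mathscr S(z,\xi)$ for each $(z,\xi)\in\mathscr K\times Y^*$. Then the map $\mathscr S\colon\mathscr K\times Y^*\to\mathcal W\cap\mathscr K$ is bounded: it maps bounded subsets of $\mathscr K\times Y^*$ (with norm $\|z\|_X+\|\xi\|_{Y^*}$) into bounded subsets of $\mathcal W$.
   Context: Setting. $X$ and $Y$ are real reflexive separable Banach spaces with duals $X^*,Y^*$; $\langle\cdot,\cdot\rangle_X$ and $\langle\cdot,\cdot\rangle_Y$ denote the duality pairings. Fix $1<p<\infty$. $\rightharpoonup$ denotes weak convergence. (H$\mathscr L$) $\mathscr L\colon D(\mathscr L)\subset X\to X^*$ is linear, densely defined and maximal monotone. Put $\mathcal W:=\{x\in D(\mathscr L): \mathscr Lx\in X^*\}$ with the graph norm $\|x\|_{\mathcal W}=\|x\|_X+\|\mathscr Lx\|_{X^*}$; "$x_n\rightharpoonup x$ in $\mathcal W$" means $x_n\rightharpoonup x$ in $X$ and $\mathscr Lx_n\rightharpoonup \mathscr Lx$ in $X^*$. (H$\mathscr K$) $\mathscr K\subset X$ is nonempty, closed and convex. (H$\mathscr M$) $\mathscr M\colon\mathscr K\to 2^{\mathscr K}$ has nonempty, closed, convex values, $0\in\operatorname{int}\big(\bigcap_{w\in\mathscr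 K}\mathscr M(w)\big)$, and: whenever $\{y_n\},\{x_n\}\subset\mathscr K$ satisfy $x_n\in\mathscr M(y_n)\cap D(\mathscr L)$, $y_n\rightharpoonup y$ in $\mathcal W$ and $x_n\rightharpoonup x$ in $\mathcal W$, then $x\in\mathscr M(y)\cap D(\mathscr L)$. (H$\mathscr F$) $\mathscr F\colon X\to X^*$ is bounded (maps bounded sets to bounded sets), monotone and hemicontinuous, and there are constants $c_{\mathscr F}>0$, $d_{\mathscr F}\ge 0$ with $\langle\mathscr F(x),x\rangle_X\ge c_{\mathscr F}\|x\|_X^p-d_{\mathscr F}$ for all $x\in X$. (H$\mathscr G$) $\mathscr G\colon Y\to 2^{Y^*}$ has nonempty, closed, convex values, its graph is sequentially closed with respect to strong convergence in $Y$ and weak convergence in $Y^*$, and there are constants $c_{\mathscr G},d_{\mathscr G}\ge0$ with $\|\xi\|_{Y^*}\le c_{\mathscr G}\|z\|_Y^{p-1}+d_{\mathscr G}$ for all $\xi\in\mathscr G(z)$, $z\in Y$. (H$\mathscr E$) $\mathscr E\in X^*$. (H$\gamma$) $\gamma\colon X\to Y$ is linear and continuous, with operator norm $\|\gamma\|$, and its restriction to $\mathcal W$ is compact from $\mathcal W$ into $Y$. (H$\Psi$) $\Psi\colon X\times X\to\mathbb R$ satisfies: (i) for each $x\in X$, $\Psi(x,\cdot)$ is convex and lower semicontinuous; (ii) there are $0<\eta<p$ and a bounded function $b_\Psi\colon X^3\to[0,\infty)$ such that $\Psi(x,y_1)-\Psi(x,y_2)\le b_\Psi(x,y_1,y_2)\|y_1-y_2\|_X^\eta$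 for all $x,y_1,y_2\in X$, and for each bounded $B\subset X$, $b_\Psi(z,0,x)/\|x\|_X^{p-\eta}\to0$ as $\|x\|_X\to\infty$ uniformly in $z\in B$; (iii) $\limsup_{n}(\Psi(w_n,y_n)-\Psi(w_n,x_n))\le\Psi(w,y)-\Psi(w,x)$ whenever $\{w_n\},\{y_n\},\{x_n\}\subset\mathscr K\cap D(\mathscr L)$ with $w_n\rightharpoonup w$, $x_n\rightharpoonup x$ in $\mathcal W$ and $y_n\to y$ in $X$; (iv) for every $v\in X$, $0$ belongs to the domain of the convex subdifferential $\partial\Psi(v,\cdot)$, $|\Psi(v,0)|\le e_\Psi$ for a constant $e_\Psi$, and there are constants $c_\Psi,d_\Psi\ge0$ and $1\le\beta<p$ with $\Psi(v,y)\ge -c_\Psi\|y\|_X^\beta-d_\Psi$ for all $v,y\in X$. Problem 2 (for given $(z,\xi)\in\mathscr K\times Y^*$): find $x\in\mathscr M(z)\cap D(\mathscr L)$ such that $\langle\mathscr Lx+\mathscr F(x)-\mathscr E,y-x\rangle_X+\langle\xi,\gamma(y-x)\rangle_Y\ge\Psi(z,x)-\Psi(z,y)$ for all $y\in\mathscr M(z)\cap D(\mathscr L)$. *)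

theory Defs
  imports "HOL-Analysis.Analysis"
begin

text \<open>Dual space of a real normed space: bounded linear functionals,
  with the operator norm; the duality pairing is function application.\<close>

definition reflexive_space :: "'a::real_normed_vector itself \<Rightarrow> bool" where
  "reflexive_space _ \<longleftrightarrow>
     (\<forall>\<phi> :: ('a \<Rightarrow>\<^sub>L real) \<Rightarrow>\<^sub>L real. \<exists>x::'a. \<forall>f. blinfun_apply \<phi> f = blinfun_apply f x)"

definition separable_space :: "'a::real_normed_vector itself \<Rightarrow> bool" where
  "separable_space _ \<longleftrightarrow> (\<exists>S::'a set. countable S \<and> closure S = UNIV)"

definition weak_conv :: "(nat \<Rightarrow> 'a::real_normed_vector) \<Rightarrow> 'a \<Rightarrow> bool" where
  "weak_conv xs x \<longleftrightarrow> (\<forall>f :: 'a \<Rightarrow>\<^sub>L real. (\<lambda>n. blinfun_apply f (xs n)) \<longlonglongrightarrow> blinfun_apply f x)"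

definition weak_conv_W :: "('a::real_normed_vector \<Rightarrow> ('a \<Rightarrow>\<^sub>L real))
     \<Rightarrow> (nat \<Rightarrow> 'a) \<Rightarrow> 'a \<Rightarrow> bool" where
  "weak_conv_W L xs x \<longleftrightarrow> weak_conv xs x \<and> weak_conv (\<lambda>n. L (xs n)) (L x)"

definition lsc :: "('a::topological_space \<Rightarrow> real) \<Rightarrow> bool" where
  "lsc f \<longleftrightarrow> (\<forall>c. closed {y. f y \<le> c})"

definition maps_bounded :: "('a::real_normed_vector \<Rightarrow> 'b::real_normed_vector) \<Rightarrow> bool" where
  "maps_bounded f \<longleftrightarrow> (\<forall>B. bounded B \<longrightarrow> bounded (f ` B))"

definition problem2 ::
  "'x::real_normed_vector set \<Rightarrow> ('x \<Rightarrow> ('x \<Rightarrow>\<^sub>L real)) \<Rightarrow> ('x \<Rightarrow> ('x \<Rightarrow>\<^sub>L real))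
   \<Rightarrow> ('x \<Rightarrow>\<^sub>L real) \<Rightarrow> ('x \<Rightarrow>\<^sub>L 'y::real_normed_vector) \<Rightarrow> ('x \<Rightarrow> 'x set)
   \<Rightarrow> ('x \<Rightarrow> 'x \<Rightarrow> real) \<Rightarrow> 'x \<Rightarrow> ('y \<Rightarrow>\<^sub>L real) \<Rightarrow> 'x \<Rightarrow> bool" where
  "problem2 D L F E \<gamma> M \<Psi> z \<xi> x \<longleftrightarrow>
     x \<in> M z \<inter> D \<and>
     (\<forall>y \<in> M z \<inter> D. blinfun_apply (L x + F x - E) (y - x) + blinfun_apply \<xi> (blinfun_apply \<gamma> (y - x)) \<ge> \<Psi> z x - \<Psi> z y)"

end

theory Submission
  imports Defs
begin

lemma growth_bound:
  fixes c K p q :: real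
  assumes "0 < c" "q < p" "0 \<le> K"
  shows "\<exists>T. \<forall>t\<ge>1. c * t powr p \<le> K * t powr q \<longrightarrow> t \<le> T"
proof (intro exI allI impI)
  define T where "T = max 1 ((K/c) powr (1/(p-q)))"
  fix t :: real assume t: "1 \<le> t" and ineq: "c * t powr p \<le> K * t powr q"
  show "t \<le> T"
  proof (rule ccontr)
    assume "\<not> t \<le> T"
    hence tT: "T < t" by simp
    have T0: "0 \<le> (K/c) powr (1/(p-q))" by simp
    have "(K/c) powr (1/(p-q)) < t" using tT T_def by simp
    hence "((K/c) powr (1/(p-q))) powr (p-q) < t powr (p-q)"
      using powr_less_mono2[of "p-q"] assms T0 by simp
    moreover have "((K/c) powr (1/(p-q))) powr (p-q) = K/c"
      using assms by (simp add: powr_powr)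
    ultimately have "K/c < t powr (p-q)" by simp
    hence "K < c * t powr (p-q)" using assms by (simp add: field_simps)
    moreover have tq: "0 < t powr q" using t by simp
    ultimately have "K * t powr q < c * t powr (p-q) * t powr q" by simp
    also have "\<dots> = c * t powr p" by (simp add: powr_add[symmetric])
    finally show False using ineq by simp
  qed
qed

theorem mainTheorem3:
  fixes D :: "'x::banach set"
    and L :: "'x \<Rightarrow> ('x \<Rightarrow>\<^sub>L real)"
    and K :: "'x set"
    and M :: "'x \<Rightarrow> 'x set"
    and F :: "'x \<Rightarrow> ('x \<Rightarrow>\<^sub>L real)"
    and G :: "'y::banach \<Rightarrow> ('y \<Rightarrow>\<^sub>L real) set"
    and E :: "'x \<Rightarrow>\<^sub>L real"
    and \<gamma> :: "'x \<Rightarrow>\<^sub>L 'y"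
    and \<Psi> :: "'x \<Rightarrow> 'x \<Rightarrow> real"
    and p c_F d_F c_G d_G :: real
  assumes spaces: "reflexive_space TYPE('x)" "separable_space TYPE('x)"
      "reflexive_space TYPE('y)" "separable_space TYPE('y)"
    and p: "1 < p"
    \<comment> \<open>(HL)\<close>
    and L_dom: "subspace D" "closure D = UNIV"
    and L_lin: "\<And>x y a b. x \<in> D \<Longrightarrow> y \<in> D \<Longrightarrow> L (a *\<^sub>R x + b *\<^sub>R y) = a *\<^sub>R L x + b *\<^sub>R L y"
    and L_mono: "\<And>x. x \<in> D \<Longrightarrow> blinfun_apply (L x) x \<ge> 0"
    and L_maximal: "\<And>u \<eta>. (\<forall>x\<in>D. blinfun_apply (L x - \<eta>) (x - u) \<ge> 0) \<Longrightarrow> u \<in> D \<and> L u = \<eta>"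
    \<comment> \<open>(HK)\<close>
    and K: "K \<noteq> {}" "closed K" "convex K"
    \<comment> \<open>(HM)\<close>
    and M_vals: "\<And>w. w \<in> K \<Longrightarrow> M w \<subseteq> K \<and> M w \<noteq> {} \<and> closed (M w) \<and> convex (M w)"
    and M_int: "0 \<in> interior (\<Inter>w\<in>K. M w)"
    and M_closed: "\<And>ys xs y x. (\<forall>n. ys n \<in> K \<and> xs n \<in> K \<and> xs n \<in> M (ys n) \<and> xs n \<in> D) \<Longrightarrow>
        y \<in> D \<Longrightarrow> x \<in> D \<Longrightarrow> weak_conv_W L ys y \<Longrightarrow> weak_conv_W L xs x \<Longrightarrow>
        x \<in> M y \<inter> D"
    \<comment> \<open>(HF)\<close>
    and F_bdd: "maps_bounded F"
    and F_mono: "\<And>x y. blinfun_apply (F x - F y) (x - y) \<ge> 0"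
    and F_hemi: "\<And>u v w. continuous_on {0..1} (\<lambda>t::real. blinfun_apply (F (u + t *\<^sub>R v)) w)"
    and F_coerc: "c_F > 0" "d_F \<ge> 0" "\<And>x. blinfun_apply (F x) x \<ge> c_F * norm x powr p - d_F"
    \<comment> \<open>(HG)\<close>
    and G_vals: "\<And>z. G z \<noteq> {} \<and> closed (G z) \<and> convex (G z)"
    and G_graph: "\<And>zs \<xi>s z \<xi>. (\<forall>n. \<xi>s n \<in> G (zs n)) \<Longrightarrow> zs \<longlonglongrightarrow> z \<Longrightarrow>
        weak_conv \<xi>s \<xi> \<Longrightarrow> \<xi> \<in> G z"
    and G_growth: "c_G \<ge> 0" "d_G \<ge> 0"
      "\<And>z \<xi>. \<xi> \<in> G z \<Longrightarrow> norm \<xi> \<le> c_G * norm z powr (p - 1) + d_G"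
    \<comment> \<open>(H\<gamma>): compactness of the restriction of \<gamma> to W\<close>
    and \<gamma>_compact: "\<And>B. B \<subseteq> D \<Longrightarrow> (\<exists>R. \<forall>x\<in>B. norm x + norm (L x) \<le> R) \<Longrightarrow>
        compact (closure (blinfun_apply \<gamma> ` B))"
    \<comment> \<open>(H\<Psi>)\<close>
    and \<Psi>_i: "\<And>x. convex_on UNIV (\<Psi> x) \<and> lsc (\<Psi> x)"
    and \<Psi>_ii: "\<exists>\<eta> (b :: 'x \<Rightarrow> 'x \<Rightarrow> 'x \<Rightarrow> real). 0 < \<eta> \<and> \<eta> < p \<and>
        (\<forall>x y z. b x y z \<ge> 0) \<and>
        (\<forall>B. bounded B \<longrightarrow> bounded ((\<lambda>(x, y, z). b x y z) ` B)) \<and>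
        (\<forall>x y1 y2. \<Psi> x y1 - \<Psi> x y2 \<le> b x y1 y2 * norm (y1 - y2) powr \<eta>) \<and>
        (\<forall>B. bounded B \<longrightarrow> (\<forall>\<epsilon>>0. \<exists>R. \<forall>z\<in>B. \<forall>x. norm x \<ge> R \<longrightarrow>
            b z 0 x / norm x powr (p - \<eta>) \<le> \<epsilon>))"
    and \<Psi>_iii: "\<And>ws ys xs w y x. (\<forall>n. ws n \<in> K \<inter> D \<and> ys n \<in> K \<inter> D \<and> xs n \<in> K \<inter> D) \<Longrightarrow>
        w \<in> D \<Longrightarrow> x \<in> D \<Longrightarrow>
        weak_conv_W L ws w \<Longrightarrow> weak_conv_W L xs x \<Longrightarrow> ys \<longlonglongrightarrow> y \<Longrightarrow>
        limsup (\<lambda>n. ereal (\<Psi> (ws n) (ys n) - \<Psi> (ws n) (xs n))) \<le> ereal (\<Psi> w y - \<Psi> w x)"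
    and \<Psi>_iv: "\<exists>e_\<Psi> c_\<Psi> d_\<Psi> \<beta>. c_\<Psi> \<ge> 0 \<and> d_\<Psi> \<ge> 0 \<and> 1 \<le> \<beta> \<and> \<beta> < p \<and>
        (\<forall>v. (\<exists>\<zeta> :: 'x \<Rightarrow>\<^sub>L real. \<forall>y. \<Psi> v y \<ge> \<Psi> v 0 + blinfun_apply \<zeta> y) \<and> \<bar>\<Psi> v 0\<bar> \<le> e_\<Psi> \<and>
             (\<forall>y. \<Psi> v y \<ge> - c_\<Psi> * norm y powr \<beta> - d_\<Psi>))"
    \<comment> \<open>smallness and strict monotonicity\<close>
    and small: "c_F > c_G * norm \<gamma> powr p"
    and F_strict: "\<And>x y. x \<noteq> y \<Longrightarrow> blinfun_apply (F x - F y) (x - y) > 0"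
  shows "\<forall>R. \<exists>C. \<forall>z \<xi> x. z \<in> K \<longrightarrow> norm z + norm \<xi> \<le> R \<longrightarrow>
           problem2 D L F E \<gamma> M \<Psi> z \<xi> x \<longrightarrow> norm x + norm (L x) \<le> C"
  proof
  fix R :: real
  obtain e cP dP \<beta> where Piv: "cP \<ge> 0" "dP \<ge> 0" "1 \<le> \<beta>" "\<beta> < p"
    "\<And>v. \<bar>\<Psi> v 0\<bar> \<le> e" "\<And>v y. \<Psi> v y \<ge> - cP * norm y powr \<beta> - dP"
    using \<Psi>_iv by blast
  from \<Psi>_ii obtain \<eta> b where Pii0: "0 < \<eta>" "\<eta> < p" "\<forall>x y z. b x y z \<ge> 0"
    "\<forall>B. bounded B \<longrightarrow> bounded ((\<lambda>(x, y, z). b x y z) ` B)"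
    "\<forall>x y1 y2. \<Psi> x y1 - \<Psi> x y2 \<le> b x y1 y2 * norm (y1 - y2) powr \<eta>"
    by (elim exE conjE) (rule that, assumption+)
  note Pii = Pii0(1) Pii0(3)[rule_format] Pii0(4)[rule_format] Pii0(5)[rule_format]
  obtain r where r: "r > 0" "ball 0 r \<subseteq> (\<Inter>w\<in>K. M w)"
    using M_int mem_interior by blast
  have e0: "0 \<le> e" using Piv(5)[of 0] by simp
  have M0: "\<And>z. z \<in> K \<Longrightarrow> 0 \<in> M z" using r(2) centre_in_ball[of 0 r] r(1) by blast
  have D0: "0 \<in> D" using L_dom(1) by (simp add: subspace_0)
  define A where "A = norm E + \<bar>R\<bar> * norm \<gamma>"
  define K0 where "K0 = A + cP + (e + dP + d_F)"
  have A0: "0 \<le> A" unfolding A_def by simp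
  have K00: "0 \<le> K0" unfolding K0_def using A0 Piv e0 F_coerc by simp
  obtain T where T: "\<forall>t\<ge>1. c_F * t powr p \<le> K0 * t powr \<beta> \<longrightarrow> t \<le> T"
    using growth_bound[OF F_coerc(1) Piv(4) K00] by blast
  define Rx where "Rx = max 1 T"
  have xbound: "norm x \<le> Rx" if zK: "z \<in> K" and nr: "norm z + norm \<xi> \<le> R"
    and P: "problem2 D L F E \<gamma> M \<Psi> z \<xi> x" for z \<xi> x
  proof -
    have xD: "x \<in> D" using P unfolding problem2_def by blast
    have ineq: "blinfun_apply (L x + F x - E) (0 - x) + blinfun_apply \<xi> (blinfun_apply \<gamma> (0 - x)) \<ge> \<Psi> z x - \<Psi> z 0"
      using P M0[OF zK] D0 unfolding problem2_def by blast
    hence main: "L x x + F x x \<le> E x - \<xi> (\<gamma> x) + \<Psi> z 0 - \<Psi> z x"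
      by (simp add: blinfun.diff_left blinfun.add_left blinfun.minus_right)
    define t where "t = norm x"
    have t0: "0 \<le> t" unfolding t_def by simp
    have h1: "E x \<le> norm E * t" using norm_blinfun[of E x] unfolding t_def by simp
    have "\<bar>\<xi> (\<gamma> x)\<bar> \<le> norm \<xi> * norm (\<gamma> x)" using norm_blinfun[of \<xi> "\<gamma> x"] by simp
    also have "\<dots> \<le> norm \<xi> * (norm \<gamma> * t)"
      using norm_blinfun[of \<gamma> x] unfolding t_def by (simp add: mult_left_mono)
    also have "\<dots> \<le> \<bar>R\<bar> * (norm \<gamma> * t)"
      using nr t0 norm_ge_zero[of z] by (intro mult_right_mono) (linarith, simp)
    finally have h2: "- \<xi> (\<gamma> x) \<le> \<bar>R\<bar> * norm \<gamma> * t" by simp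
    have h3: "\<Psi> z 0 \<le> e" using Piv(5)[of z] by simp
    have h4: "- \<Psi> z x \<le> cP * t powr \<beta> + dP" using Piv(6)[of x z] unfolding t_def by simp
    have h5: "0 \<le> L x x" using L_mono[OF xD] .
    have h6: "c_F * t powr p - d_F \<le> F x x" using F_coerc(3)[of x] unfolding t_def by simp
    have bnd: "c_F * t powr p \<le> A * t + cP * t powr \<beta> + (e + dP + d_F)"
      using main h1 h2 h3 h4 h5 h6 unfolding A_def by (simp add: algebra_simps)
    show ?thesis
    proof (cases "t < 1")
      case True thus ?thesis unfolding t_def Rx_def by simp
    next
      case False
      hence t1: "1 \<le> t" by simp
      have tb: "t \<le> t powr \<beta>" using powr_mono[OF Piv(3) t1] t1 by simp
      have tb1: "1 \<le> t powr \<beta>" using t1 tb by simp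
      have "A * t + cP * t powr \<beta> + (e + dP + d_F) \<le> A * t powr \<beta> + cP * t powr \<beta> + (e + dP + d_F) * t powr \<beta>"
      proof -
        have "e + dP + d_F \<le> (e + dP + d_F) * t powr \<beta>"
          using mult_left_mono[OF tb1, of "e + dP + d_F"] e0 Piv F_coerc by simp
        moreover have "A * t \<le> A * t powr \<beta>" using mult_left_mono[OF tb A0] .
        ultimately show ?thesis by linarith
      qed
      also have "\<dots> = K0 * t powr \<beta>" unfolding K0_def by (simp add: algebra_simps)
      finally have "t \<le> T" using T t1 bnd by auto
      thus ?thesis unfolding t_def Rx_def by simp
    qed
  qed
  have "bounded (F ` cball 0 Rx)" using F_bdd unfolding maps_bounded_def by simp
  then obtain BF where BF: "\<And>x. x \<in> cball 0 Rx \<Longrightarrow> norm (F x) \<le> BF"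
    unfolding bounded_iff by blast
  have "bounded ((\<lambda>(x, y, z). b x y z) ` (cball (0::'x) \<bar>R\<bar> \<times> (cball (0::'x) r \<times> {0::'x})))"
    by (intro Pii(3) bounded_Times) auto
  then obtain Bb where Bb: "\<And>u. u \<in> (\<lambda>(x, y, z). b x y z) ` (cball (0::'x) \<bar>R\<bar> \<times> (cball (0::'x) r \<times> {0::'x})) \<Longrightarrow> norm u \<le> Bb"
    unfolding bounded_iff by blast
  define C1 where "C1 = cP * Rx powr \<beta> + dP + e + Bb * r powr \<eta> + (BF + norm E)*(r+Rx) + \<bar>R\<bar>*norm \<gamma>*(r+Rx)"
  show "\<exists>C. \<forall>z \<xi> x. z \<in> K \<longrightarrow> norm z + norm \<xi> \<le> R \<longrightarrow>
           problem2 D L F E \<gamma> M \<Psi> z \<xi> x \<longrightarrow> norm x + norm (L x) \<le> C"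
  proof (rule exI[where x="Rx + 2 * C1 / r"], intro allI impI)
    fix z \<xi> x assume zK: "z \<in> K" and nr: "norm z + norm \<xi> \<le> R"
      and P: "problem2 D L F E \<gamma> M \<Psi> z \<xi> x"
    have nx: "norm x \<le> Rx" using xbound[OF zK nr P] .
    have xD: "x \<in> D" using P unfolding problem2_def by blast
    have lower: "- C1 \<le> L x v" if vD: "v \<in> D" and vr: "norm v < r" for v
    proof -
      have vM: "v \<in> M z" using r zK vr by auto
      have ineq: "blinfun_apply (L x + F x - E) (v - x) + blinfun_apply \<xi> (blinfun_apply \<gamma> (v - x)) \<ge> \<Psi> z x - \<Psi> z v"
        using P vM vD unfolding problem2_def by blast
      hence m: "L x v - L x x \<ge> \<Psi> z x - \<Psi> z v - (F x - E) (v - x) - \<xi> (\<gamma> (v - x))"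
        by (simp add: blinfun.add_left blinfun.diff_left blinfun.diff_right algebra_simps)
      have h5: "0 \<le> L x x" using L_mono[OF xD] .
      have "norm x powr \<beta> \<le> Rx powr \<beta>" using nx Piv(3) by (intro powr_mono2) auto
      hence h1: "- cP * Rx powr \<beta> - dP \<le> \<Psi> z x"
        using Piv(6)[of x z] Piv(1) mult_left_mono[of "norm x powr \<beta>" "Rx powr \<beta>" cP] by linarith
      have nz: "norm z \<le> \<bar>R\<bar>" using nr norm_ge_zero[of \<xi>] by linarith
      have "(z, v, 0) \<in> cball (0::'x) \<bar>R\<bar> \<times> (cball (0::'x) r \<times> {0::'x})" using nz vr by simp
      hence "norm (b z v 0) \<le> Bb" using Bb by force
      hence bb: "b z v 0 \<le> Bb" by simp
      have "norm v powr \<eta> \<le> r powr \<eta>" using vr Pii(1) by (intro powr_mono2) auto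
      hence "b z v 0 * norm v powr \<eta> \<le> Bb * r powr \<eta>"
        using bb Pii(2)[of z v 0] by (intro mult_mono) auto
      hence h2: "\<Psi> z v \<le> e + Bb * r powr \<eta>"
        using Pii(4)[of z v 0] Piv(5)[of z] by simp
      have nxi: "norm \<xi> \<le> \<bar>R\<bar>" using nr norm_ge_zero[of z] by linarith
      have nvx: "norm (v - x) \<le> r + Rx" using norm_triangle_ineq4[of v x] vr nx by simp
      have "norm (F x) \<le> BF" using BF nx by simp
      hence nF: "norm (F x - E) \<le> BF + norm E" using norm_triangle_ineq4[of "F x" E] by simp
      have "(F x - E) (v - x) \<le> norm (F x - E) * norm (v - x)"
        using norm_blinfun[of "F x - E" "v - x"] by simp
      also have "\<dots> \<le> (BF + norm E) * (r + Rx)"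
        using nF nvx order_trans[OF norm_ge_zero nF] by (intro mult_mono) auto
      finally have h3: "(F x - E) (v - x) \<le> (BF + norm E) * (r + Rx)" .
      have "\<bar>\<xi> (\<gamma> (v - x))\<bar> \<le> norm \<xi> * norm (\<gamma> (v - x))" using norm_blinfun[of \<xi> "\<gamma> (v - x)"] by simp
      also have "\<dots> \<le> norm \<xi> * (norm \<gamma> * norm (v - x))"
        using norm_blinfun[of \<gamma> "v - x"] by (simp add: mult_left_mono)
      also have "\<dots> \<le> \<bar>R\<bar> * (norm \<gamma> * (r + Rx))"
        using nxi nvx by (intro mult_mono) (auto simp: mult_left_mono)
      finally have h4: "\<xi> (\<gamma> (v - x)) \<le> \<bar>R\<bar> * norm \<gamma> * (r + Rx)" by simp
      show ?thesis using m h1 h2 h3 h4 h5 unfolding C1_def by (simp add: algebra_simps)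
    qed
    have absb: "\<bar>L x v\<bar> \<le> C1" if vD: "v \<in> D" and vr: "norm v < r" for v
    proof -
      have "- v \<in> D" using L_dom(1) vD by (simp add: subspace_neg)
      hence "- C1 \<le> L x (- v)" using lower vr by simp
      hence "L x v \<le> C1" by (simp add: blinfun.minus_right)
      thus ?thesis using lower[OF vD vr] by simp
    qed
    have C10: "0 \<le> C1" using absb[OF D0] r by simp
    have cl: "closed {v. \<bar>L x v\<bar> \<le> C1}"
      by (intro closed_Collect_le continuous_intros)
    have "ball 0 r \<inter> D \<subseteq> {v. \<bar>L x v\<bar> \<le> C1}" using absb by auto
    hence "closure (ball 0 r \<inter> D) \<subseteq> {v. \<bar>L x v\<bar> \<le> C1}" using cl by (rule closure_minimal)
    moreover have "ball 0 r \<subseteq> closure (ball 0 r \<inter> D)"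
      using open_Int_closure_subset[of "ball (0::'x) r" D] L_dom(2) by simp
    ultimately have allb: "\<And>v. norm v < r \<Longrightarrow> \<bar>L x v\<bar> \<le> C1" by auto
    have "norm (L x) \<le> 2 * C1 / r"
    proof (rule norm_blinfun_bound)
      show "0 \<le> 2 * C1 / r" using C10 r by simp
      fix w :: 'x
      show "norm (L x w) \<le> 2 * C1 / r * norm w"
      proof (cases "w = 0")
        case True thus ?thesis by simp
      next
        case False
        hence nw: "0 < norm w" by simp
        define v where "v = (r / (2 * norm w)) *\<^sub>R w"
        have "norm v = r / 2" unfolding v_def using nw r by simp
        hence "\<bar>L x v\<bar> \<le> C1" using allb r by simp
        moreover have "L x v = (r / (2 * norm w)) * L x w" unfolding v_def by (simp add: blinfun.scaleR_right)
        ultimately have "(r / (2 * norm w)) * \<bar>L x w\<bar> \<le> C1" using r nw by (simp add: abs_mult)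
        thus ?thesis using r nw by (simp add: field_simps)
      qed
    qed
    thus "norm x + norm (L x) \<le> Rx + 2 * C1 / r" using nx by simp
  qed
qed

end
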